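(* Let $p$ be a prime and let $C_p=\{I\subset\mathbf{R}\mid I \text{ a subgroup with } I\cong\mathbf{Z}[1/p] \text{ as abelian groups}\}$. For $I_1,I_2\in C_p$ define $I_1\cdot I_2$ to be the subgroup of $\mathbf{R}$ generated by $\{xy\mid x\in I_1,\ y\in I_2\}$. Then $C_p$ is an abelian group under this operation. *)

theory Defs
  imports Complex_Main "HOL-Computational_Algebra.Primes" "HOL-Algebra.Group"
begin

definition real_subgroup :: "real set \<Rightarrow> bool" where
  "real_subgroup I \<longleftrightarrow> 0 \<in> I \<and> (\<forall>x\<in>I. \<forall>y\<in>I. x + y \<in> I) \<and> (\<forall>x\<in>I. - x \<in> I)"

text \<open>The group Z[1/p], realised as the subring of R of fractions k / p^n.\<close>
definition Zinv :: "nat \<Rightarrow> real set" where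
  "Zinv p = {x. \<exists>k::int. \<exists>n::nat. x = of_int k / real p ^ n}"

definition add_iso :: "real set \<Rightarrow> real set \<Rightarrow> bool" where
  "add_iso I J \<longleftrightarrow> (\<exists>f. bij_betw f I J \<and> (\<forall>x\<in>I. \<forall>y\<in>I. f (x + y) = f x + f y))"

definition Cp :: "nat \<Rightarrow> real set set" where
  "Cp p = {I. real_subgroup I \<and> add_iso I (Zinv p)}"

definition gen_subgroup :: "real set \<Rightarrow> real set" where
  "gen_subgroup S = \<Inter>{H. real_subgroup H \<and> S \<subseteq> H}"

definition Cp_mult :: "real set \<Rightarrow> real set \<Rightarrow> real set" where
  "Cp_mult I1 I2 = gen_subgroup {x * y | x y. x \<in> I1 \<and> y \<in> I2}"

end

theory Submission
  imports Defs
begin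

definition Sc :: "nat \<Rightarrow> real \<Rightarrow> real set" where
  "Sc p a = (\<lambda>x. a * x) ` Zinv p"

lemma Zinv_0: "0 \<in> Zinv p"
  unfolding Zinv_def by (rule CollectI, rule exI[of _ 0], rule exI[of _ 0], simp)

lemma Zinv_1: "1 \<in> Zinv p"
  unfolding Zinv_def by (rule CollectI, rule exI[of _ 1], rule exI[of _ 0], simp)

lemma Zinv_inv_pow: "1 / real p ^ n \<in> Zinv p"
  unfolding Zinv_def by (rule CollectI, rule exI[of _ 1], rule exI[of _ n], simp)

lemma Zinv_add:
  assumes "p > 0" "x \<in> Zinv p" "y \<in> Zinv p" shows "x + y \<in> Zinv p"
proof -
  obtain k n where x: "x = of_int k / real p ^ n" using assms(2) unfolding Zinv_def by auto
  obtain l m where y: "y = of_int l / real p ^ m" using assms(3) unfolding Zinv_def by auto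
  have "x + y = of_int (k * int p ^ m + l * int p ^ n) / real p ^ (n + m)"
    using assms(1) by (simp add: x y field_simps power_add)
  then show ?thesis unfolding Zinv_def by blast
qed

lemma Zinv_neg:
  assumes "x \<in> Zinv p" shows "- x \<in> Zinv p"
proof -
  obtain k n where x: "x = of_int k / real p ^ n" using assms unfolding Zinv_def by auto
  have "- x = of_int (- k) / real p ^ n" by (simp add: x)
  then show ?thesis unfolding Zinv_def by blast
qed

lemma Zinv_mult:
  assumes "x \<in> Zinv p" "y \<in> Zinv p" shows "x * y \<in> Zinv p"
proof -
  obtain k n where x: "x = of_int k / real p ^ n" using assms(1) unfolding Zinv_def by auto
  obtain l m where y: "y = of_int l / real p ^ m" using assms(2) unfolding Zinv_def by auto
  have "x * y = of_int (k * l) / real p ^ (n + m)"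
    by (simp add: x y power_add)
  then show ?thesis unfolding Zinv_def by blast
qed

lemma Zinv_nat_mult:
  assumes "p > 0" "x \<in> Zinv p" shows "of_nat m * x \<in> Zinv p"
proof (induction m)
  case 0 then show ?case using Zinv_0 by simp
next
  case (Suc m)
  have "of_nat m * x + x \<in> Zinv p" using Zinv_add[OF assms(1) Suc assms(2)] .
  then show ?case by (simp add: algebra_simps)
qed

lemma Sc_subgroup: "p > 0 \<Longrightarrow> real_subgroup (Sc p a)"
  unfolding real_subgroup_def Sc_def
proof (intro conjI ballI)
  assume p: "p > 0"
  show "0 \<in> (*) a ` Zinv p" using Zinv_0[of p] by (metis image_eqI mult_zero_right)
  fix x y assume "x \<in> (*) a ` Zinv p" "y \<in> (*) a ` Zinv p"
  then obtain u v where "u \<in> Zinv p" "v \<in> Zinv p" "x = a * u" "y = a * v" by auto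
  then show "x + y \<in> (*) a ` Zinv p" using Zinv_add[OF p, of u v]
    by (metis distrib_left image_eqI)
next
  fix x assume "x \<in> (*) a ` Zinv p"
  then obtain u where "u \<in> Zinv p" "x = a * u" by auto
  then show "- x \<in> (*) a ` Zinv p" using Zinv_neg[of u p]
    by (metis image_eqI mult_minus_right)
qed

lemma Sc_in_Cp:
  assumes "p > 0" "a \<noteq> 0" shows "Sc p a \<in> Cp p"
proof -
  have "bij_betw (\<lambda>x. x / a) (Sc p a) (Zinv p)"
  proof (rule bij_betwI')
    show "\<And>x y. x \<in> Sc p a \<Longrightarrow> y \<in> Sc p a \<Longrightarrow> (x / a = y / a) = (x = y)"
      using assms(2) by (auto simp: field_simps)
    show "\<And>x. x \<in> Sc p a \<Longrightarrow> x / a \<in> Zinv p" using assms(2) unfolding Sc_def by auto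
    show "\<And>y. y \<in> Zinv p \<Longrightarrow> \<exists>x\<in>Sc p a. y = x / a"
      using assms(2) unfolding Sc_def by force
  qed
  then have "add_iso (Sc p a) (Zinv p)"
    unfolding add_iso_def by (intro exI[of _ "\<lambda>x. x / a"]) (simp add: add_divide_distrib)
  then show ?thesis using Sc_subgroup[OF assms(1)] unfolding Cp_def by auto
qed

lemma Cp_char:
  assumes "p > 0" "I \<in> Cp p" shows "\<exists>a. a \<noteq> 0 \<and> I = Sc p a"
proof -
  have sg: "real_subgroup I" and "add_iso I (Zinv p)" using assms(2) unfolding Cp_def by auto
  then obtain f where bf: "bij_betw f I (Zinv p)" and fa: "\<forall>x\<in>I. \<forall>y\<in>I. f (x + y) = f x + f y"
    unfolding add_iso_def by auto
  define g where "g = inv_into I f"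
  have bg: "bij_betw g (Zinv p) I" unfolding g_def by (rule bij_betw_inv_into[OF bf])
  have gI: "g x \<in> I" if "x \<in> Zinv p" for x using bg that by (meson bij_betwE)
  have fg: "f (g x) = x" if "x \<in> Zinv p" for x
    using bf that unfolding g_def by (meson bij_betw_inv_into_right)
  have gf: "g (f x) = x" if "x \<in> I" for x
    using bf that unfolding g_def by (meson bij_betw_inv_into_left)
  have gadd: "g (x + y) = g x + g y" if "x \<in> Zinv p" "y \<in> Zinv p" for x y
  proof -
    have "g x + g y \<in> I" using sg gI that unfolding real_subgroup_def by auto
    moreover have "f (g x + g y) = x + y" using fa gI fg that by simp
    ultimately show ?thesis using gf by metis
  qed
  have g0: "g 0 = 0" using gadd[OF Zinv_0 Zinv_0] by simp
  have gneg: "g (- x) = - g x" if "x \<in> Zinv p" for x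
    using gadd[OF that Zinv_neg[OF that]] g0 by simp
  have gnat: "g (of_nat m * x) = of_nat m * g x" if "x \<in> Zinv p" for x m
  proof (induction m)
    case 0 then show ?case using g0 by simp
  next
    case (Suc m)
    have mx: "of_nat m * x \<in> Zinv p" by (rule Zinv_nat_mult[OF assms(1) that])
    have "g (of_nat (Suc m) * x) = g (of_nat m * x + x)" by (simp add: algebra_simps)
    also have "\<dots> = of_nat (Suc m) * g x" using gadd[OF mx that] Suc by (simp add: distrib_right)
    finally show ?case .
  qed
  have gint: "g (of_int k * x) = of_int k * g x" if "x \<in> Zinv p" for x k
  proof (cases "k \<ge> 0")
    case True
    define m where "m = nat k"
    have "k = int m" using True unfolding m_def by simp
    then show ?thesis using gnat[OF that, of m] by simp
  next
    case False
    define m where "m = nat (- k)"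
    have k: "k = - int m" using False unfolding m_def by simp
    have mx: "of_nat m * x \<in> Zinv p" by (rule Zinv_nat_mult[OF assms(1) that])
    have "g (of_int k * x) = g (- (of_nat m * x))" by (simp add: k)
    also have "\<dots> = - (of_nat m * g x)" using gneg[OF mx] gnat[OF that] by simp
    finally show ?thesis by (simp add: k)
  qed
  define a where "a = g 1"
  have gpow: "g (1 / real p ^ n) = a / real p ^ n" for n
  proof -
    have "a = g (of_nat (p ^ n) * (1 / real p ^ n))" using assms(1) unfolding a_def by simp
    also have "\<dots> = of_nat (p ^ n) * g (1 / real p ^ n)" by (rule gnat[OF Zinv_inv_pow])
    finally show ?thesis using assms(1) by (simp add: field_simps)
  qed
  have glin: "g x = a * x" if Hx: "x \<in> Zinv p" for x
  proof -
    obtain k n where x: "x = of_int k / real p ^ n" using Hx unfolding Zinv_def by auto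
    have "x = of_int k * (1 / real p ^ n)" by (simp add: x)
    then have "g x = of_int k * g (1 / real p ^ n)" using gint[OF Zinv_inv_pow, of k n] by simp
    also have "\<dots> = of_int k * (a / real p ^ n)" by (simp only: gpow)
    finally show ?thesis by (simp add: x)
  qed
  have "I = g ` Zinv p" using bg by (simp add: bij_betw_def)
  also have "\<dots> = Sc p a" unfolding Sc_def using glin by (auto intro!: image_cong)
  finally have "I = Sc p a" .
  moreover have "a \<noteq> 0"
  proof
    assume "a = 0"
    then have "g 1 = g 0" using glin[OF Zinv_1] g0 by simp
    moreover have "inj_on g (Zinv p)" using bg by (simp add: bij_betw_def)
    ultimately show False using Zinv_0 Zinv_1 by (metis inj_onD zero_neq_one)
  qed
  ultimately show ?thesis by blast
qed

lemma gen_subgroup_id: "real_subgroup H \<Longrightarrow> gen_subgroup H = H"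
  unfolding gen_subgroup_def by blast

lemma Sc_mult: "p > 0 \<Longrightarrow> Cp_mult (Sc p a) (Sc p b) = Sc p (a * b)"
proof -
  assume p: "p > 0"
  have "{x * y | x y. x \<in> Sc p a \<and> y \<in> Sc p b} = Sc p (a * b)"
  proof safe
    fix x y assume "x \<in> Sc p a" "y \<in> Sc p b"
    then obtain u v where uv: "u \<in> Zinv p" "v \<in> Zinv p" "x = a * u" "y = b * v" unfolding Sc_def by blast
    have "x * y = (a * b) * (u * v)" using uv by (simp add: algebra_simps)
    moreover have "u * v \<in> Zinv p" using Zinv_mult[OF uv(1,2)] .
    ultimately show "x * y \<in> Sc p (a * b)" unfolding Sc_def by blast
  next
    fix z assume "z \<in> Sc p (a * b)"
    then obtain u where u: "u \<in> Zinv p" "z = a * b * u" unfolding Sc_def by auto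
    have "a * u \<in> Sc p a" "b * 1 \<in> Sc p b" unfolding Sc_def using u Zinv_1 by auto
    moreover have "z = (a * u) * (b * 1)" using u by simp
    ultimately show "\<exists>x y. z = x * y \<and> x \<in> Sc p a \<and> y \<in> Sc p b" by blast
  qed
  then show ?thesis unfolding Cp_mult_def using gen_subgroup_id[OF Sc_subgroup[OF p]] by simp
qed

lemma Sc_1: "Sc p 1 = Zinv p" unfolding Sc_def by simp

theorem proposition6p1:
  fixes p :: nat
  assumes "prime p"
  shows "\<exists>e. comm_group \<lparr>carrier = Cp p, mult = Cp_mult, one = e\<rparr>"
proof (intro exI[of _ "Zinv p"] comm_groupI, simp_all)
  have p: "p > 0" using assms prime_gt_0_nat by blast
  show "Cp_mult x y \<in> Cp p" if H: "x \<in> Cp p" "y \<in> Cp p" for x y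
  proof -
    obtain a where a: "a \<noteq> 0" "x = Sc p a" using Cp_char[OF p H(1)] by blast
    obtain b where b: "b \<noteq> 0" "y = Sc p b" using Cp_char[OF p H(2)] by blast
    have "a * b \<noteq> 0" using a b by simp
    then show ?thesis using a b Sc_mult[OF p] Sc_in_Cp[OF p] by simp
  qed
  show "Zinv p \<in> Cp p" using Sc_in_Cp[OF p, of 1] Sc_1 by simp
  show "Cp_mult (Cp_mult x y) z = Cp_mult x (Cp_mult y z)"
    if H: "x \<in> Cp p" "y \<in> Cp p" "z \<in> Cp p" for x y z
  proof -
    obtain a where a: "x = Sc p a" using Cp_char[OF p H(1)] by blast
    obtain b where b: "y = Sc p b" using Cp_char[OF p H(2)] by blast
    obtain c where c: "z = Sc p c" using Cp_char[OF p H(3)] by blast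
    show ?thesis using a b c Sc_mult[OF p] by (simp add: mult.assoc)
  qed
  show "Cp_mult x y = Cp_mult y x" if H: "x \<in> Cp p" "y \<in> Cp p" for x y
  proof -
    obtain a where a: "x = Sc p a" using Cp_char[OF p H(1)] by blast
    obtain b where b: "y = Sc p b" using Cp_char[OF p H(2)] by blast
    show ?thesis using a b Sc_mult[OF p] by (simp add: mult.commute)
  qed
  show "Cp_mult (Zinv p) x = x" if H: "x \<in> Cp p" for x
  proof -
    obtain a where a: "x = Sc p a" using Cp_char[OF p H(1)] by blast
    have "Cp_mult (Sc p 1) (Sc p a) = Sc p a" using Sc_mult[OF p] by simp
    then show ?thesis using a Sc_1 by simp
  qed
  show "\<exists>y\<in>Cp p. Cp_mult y x = Zinv p" if H: "x \<in> Cp p" for x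
  proof -
    obtain a where a: "a \<noteq> 0" "x = Sc p a" using Cp_char[OF p H] by blast
    have "Cp_mult (Sc p (1/a)) (Sc p a) = Sc p 1" using Sc_mult[OF p] a(1) by simp
    then have "Cp_mult (Sc p (1/a)) x = Zinv p" using a Sc_1 by simp
    then show ?thesis using Sc_in_Cp[OF p, of "1/a"] a by auto
  qed
qed

end
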